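(* Let $\lambda\in\mathbb{C}$ with $\operatorname{Re}\lambda\ge 0$, and let $(p,q)\in H^2(\mathbb{R})\times H^2(\mathbb{R})$ be a solution of the eigenvalue problem \[ \lambda p = p_{\xi\xi}+c\,p_\xi+F_w(\widehat w)\,\widehat y\,(hp-(1-h)q)+F(\widehat w)\,q,\qquad \lambda q = \varepsilon q_{\xi\xi}+c\,q_\xi-F_w(\widehat w)\,\widehat y\,(hp-(1-h)q)-F(\widehat w)\,q . \] Then for every real $\epsilon_1>0$, \[ \operatorname{Re}\lambda\int_{\mathbb{R}}|p|^2\,d\xi\le h\int_{\mathbb{R}}F_w(\widehat w)\,\widehat y\,|p|^2\,d\xi+\int_{\mathbb{R}}\big(F(\widehat w)+(1-h)F_w(\widehat w)\,\widehat y\big)\Big(\frac{|q|^2}{4\epsilon_1}+\epsilon_1|p|^2\Big)d\xi, \] and \[ \big(\operatorname{Re}\lambda+|\operatorname{Im}\lambda|\big)\int_{\mathbb{R}}|p|^2\,d\xi\le \frac{c^2}{4}\int_{\mathbb{R}}|p|^2\,d\xi+h\int_{\mathbb{R}}F_w(\widehat w)\,\widehat y\,|p|^2\,d\xi+\int_{\mathbb{R}}\big(F(\widehat w)+(1-h)F_w(\widehat w)\,\widehat y\big)\Big(\frac{|q|^2}{2\epsilon_1}+\epsilon_1|p|^2\Big)d\xi . \]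
   Context: Parameters: $\varepsilon\in(0,1)$, $h\in(0,1)$, Zeldovich number $Z>0$, $\sigma\in(0,1)$, ignition temperature $T_{ign}>0$ and $\delta>0$ with $T_{ign}+2\delta<1$. The reaction rate $F=F_\delta$ is \[ F(v)=\begin{cases}\exp\!\Big(Z\frac{v-h}{\sigma+(1-\sigma)v}\Big), & v\ge T_{ign}+2\delta,\\[2pt] \exp\!\Big(Z\frac{v-h}{\sigma+(1-\sigma)v}\Big)H^\delta(v-T_{ign}-\delta), & T_{ign}\le v<T_{ign}+2\delta,\\[2pt] 0, & v<T_{ign},\end{cases} \] where $H^\delta(x)=1/(1+e^{4x\delta/(\delta^2-x^2)})$ for $|x|<\delta$, $H^\delta(x)=1$ for $x\ge\delta$, $H^\delta(x)=0$ for $x\le-\delta$. $F$ is nonnegative and nondecreasing, and $F_w$ denotes its derivative (so $F_w\ge 0$). $c>0$ and $(\widehat u,\widehat y)$ is a traveling front, i.e. a solution of $u''+cu'+yF(hu+(1-h)(1-y))=0$, $\varepsilon y''+cy'-yF(hu+(1-h)(1-y))=0$ with $(u,y)\to(1,0)$ as $\xi\to-\infty$ and $(u,y)\to(0,1)$ as $\xi\to+\infty$; it is assumed that $0\le\widehat y\le 1$ and $0\le \widehat w\le 1$, where $\widehat w=h\widehat u+(1-h)(1-\widehat y)$. *)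

theory Defs
  imports "HOL-Analysis.Analysis"
begin

text \<open>Smoothed Heaviside function H^delta (sign of the exponent corrected so that
  H^delta increases smoothly from 0 to 1 on (-delta, delta)).\<close>
definition Hdelta :: "real \<Rightarrow> real \<Rightarrow> real" where
  "Hdelta \<delta> x =
     (if \<delta> \<le> x then 1
      else if x \<le> - \<delta> then 0
      else 1 / (1 + exp (- (4 * x * \<delta> / (\<delta>\<^sup>2 - x\<^sup>2)))))"

definition Frate :: "real \<Rightarrow> real \<Rightarrow> real \<Rightarrow> real \<Rightarrow> real \<Rightarrow> real \<Rightarrow> real" where
  "Frate Z h \<sigma> Tign \<delta> v =
     (if Tign + 2 * \<delta> \<le> v then exp (Z * (v - h) / (\<sigma> + (1 - \<sigma>) * v))
      else if Tign \<le> v then exp (Z * (v - h) / (\<sigma> + (1 - \<sigma>) * v)) * Hdelta \<delta> (v - Tign - \<delta>)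
      else 0)"

definition Fw :: "real \<Rightarrow> real \<Rightarrow> real \<Rightarrow> real \<Rightarrow> real \<Rightarrow> real \<Rightarrow> real" where
  "Fw Z h \<sigma> Tign \<delta> v = deriv (Frate Z h \<sigma> Tign \<delta>) v"

definition L2 :: "(real \<Rightarrow> complex) \<Rightarrow> bool" where
  "L2 f \<longleftrightarrow> f \<in> borel_measurable lborel \<and> integrable lborel (\<lambda>x. (norm (f x))\<^sup>2)"

text \<open>For solutions of the eigenvalue problem (continuous coefficients) H^2 solutions are
  exactly the C^2 ones, so derivatives are taken classically.\<close>
definition H2 :: "(real \<Rightarrow> complex) \<Rightarrow> (real \<Rightarrow> complex) \<Rightarrow> (real \<Rightarrow> complex) \<Rightarrow> bool" where
  "H2 f f1 f2 \<longleftrightarrow>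
     (\<forall>x. (f has_vector_derivative f1 x) (at x)) \<and>
     (\<forall>x. (f1 has_vector_derivative f2 x) (at x)) \<and>
     L2 f \<and> L2 f1 \<and> L2 f2"

end

theory Submission
  imports Defs
begin


lemma tendsto_integrable_zero:
  fixes g :: "real \<Rightarrow> real"
  assumes ig: "integrable lborel g" and lim: "(g \<longlongrightarrow> L) at_top"
  shows "L = 0"
proof (rule ccontr)
  assume L: "L \<noteq> 0"
  have "eventually (\<lambda>x. dist (g x) L < \<bar>L\<bar>/2) at_top"
    using tendstoD[OF lim, of "\<bar>L\<bar>/2"] L by simp
  then obtain M where M: "\<And>x. x \<ge> M \<Longrightarrow> dist (g x) L < \<bar>L\<bar>/2"
    by (auto simp: eventually_at_top_linorder)
  have big: "\<bar>g x\<bar> \<ge> \<bar>L\<bar>/2" if "x \<ge> M" for x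
    using M[OF that] by (simp add: dist_real_def) (smt (verit))
  have ia: "integrable lborel (\<lambda>x. \<bar>g x\<bar>)" using ig by auto
  have "real n * (\<bar>L\<bar>/2) \<le> (LINT x|lborel. \<bar>g x\<bar>)" for n :: nat
  proof -
    have "(LINT x|lborel. indicator {M..M + real n} x * (\<bar>L\<bar>/2)) \<le> (LINT x|lborel. \<bar>g x\<bar>)"
      apply (rule integral_mono)
        apply (rule integrable_mult_left, rule integrable_real_indicator; simp)
       apply (rule ia)
      using big by (auto simp: indicator_def)
    moreover have "(LINT x|lborel. indicator {M..M + real n} x * (\<bar>L\<bar>/2)) = real n * (\<bar>L\<bar>/2)"
      by simp
    ultimately show ?thesis by simp
  qed
  moreover obtain n :: nat where "real n > (LINT x|lborel. \<bar>g x\<bar>) / (\<bar>L\<bar>/2)"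
    using reals_Archimedean2 by blast
  ultimately show False using L
    by (smt (verit, best) divide_less_eq zero_less_divide_iff zero_less_abs_iff)
qed



lemma ftc_Icc:
  fixes g g' :: "real \<Rightarrow> real"
  assumes D: "\<And>x. (g has_real_derivative g' x) (at x)" and ig': "integrable lborel g'"
    and ab: "a \<le> b"
  shows "(LINT x:{a..b}|lborel. g' x) = g b - g a"
proof -
  have si: "set_integrable lborel {a..b} g'"
    unfolding set_integrable_def using ig' by (intro integrable_mult_indicator) auto
  have "(g' has_integral g b - g a) {a..b}"
    apply (rule fundamental_theorem_of_calculus[OF ab])
    using D by (simp add: has_real_derivative_iff_has_vector_derivative has_vector_derivative_at_within)
  then show ?thesis using set_borel_integral_eq_integral(2)[OF si]
    by (simp add: integral_unique)
qed

lemma lim_top: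
  fixes g g' :: "real \<Rightarrow> real"
  assumes D: "\<And>x. (g has_real_derivative g' x) (at x)" and ig': "integrable lborel g'"
    and ig: "integrable lborel g"
  shows "(LINT x:{0..}|lborel. g' x) = - g 0"
proof -
  have si: "set_integrable lborel {0..} g'"
    unfolding set_integrable_def using ig' by (intro integrable_mult_indicator) auto
  have "((\<lambda>b. LINT x:{0..b}|lborel. g' x) \<longlongrightarrow> (LINT x:{0..}|lborel. g' x)) at_top"
    by (rule tendsto_set_lebesgue_integral_at_top[OF _ si]) auto
  moreover have "eventually (\<lambda>b. (LINT x:{0..b}|lborel. g' x) = g b - g 0) at_top"
    using ftc_Icc[OF D ig'] by (auto simp: eventually_at_top_linorder intro!: exI[of _ 0])
  ultimately have "((\<lambda>b. g b - g 0) \<longlongrightarrow> (LINT x:{0..}|lborel. g' x)) at_top"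
    by (rule Lim_transform_eventually)
  then have "((\<lambda>b. (g b - g 0) + g 0) \<longlongrightarrow> (LINT x:{0..}|lborel. g' x) + g 0) at_top"
    by (intro tendsto_add) auto
  then have "(g \<longlongrightarrow> (LINT x:{0..}|lborel. g' x) + g 0) at_top" by simp
  from tendsto_integrable_zero[OF ig this] show ?thesis by simp
qed

lemma lim_bot:
  fixes g g' :: "real \<Rightarrow> real"
  assumes D: "\<And>x. (g has_real_derivative g' x) (at x)" and ig': "integrable lborel g'"
    and ig: "integrable lborel g"
  shows "(LINT x:{..0}|lborel. g' x) = g 0"
proof -
  have si: "set_integrable lborel {..0} g'"
    unfolding set_integrable_def using ig' by (intro integrable_mult_indicator) auto
  have "((\<lambda>a. LINT x:{a..0}|lborel. g' x) \<longlongrightarrow> (LINT x:{..0}|lborel. g' x)) at_bot"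
    by (rule tendsto_set_lebesgue_integral_at_bot[OF _ si]) auto
  moreover have "eventually (\<lambda>a. (LINT x:{a..0}|lborel. g' x) = g 0 - g a) at_bot"
    using ftc_Icc[OF D ig'] by (auto simp: eventually_at_bot_linorder intro!: exI[of _ 0])
  ultimately have "((\<lambda>a. g 0 - g a) \<longlongrightarrow> (LINT x:{..0}|lborel. g' x)) at_bot"
    by (rule Lim_transform_eventually)
  then have "((\<lambda>a. g 0 - (g 0 - g a)) \<longlongrightarrow> g 0 - (LINT x:{..0}|lborel. g' x)) at_bot"
    by (intro tendsto_diff) auto
  then have "(g \<longlongrightarrow> g 0 - (LINT x:{..0}|lborel. g' x)) at_bot" by simp
  then have "((\<lambda>x. g (- x)) \<longlongrightarrow> g 0 - (LINT x:{..0}|lborel. g' x)) at_top"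
    by (rule filterlim_compose) (rule filterlim_uminus_at_bot_at_top)
  moreover have "integrable lborel (\<lambda>x. g (- x))"
    using lborel_integrable_real_affine_iff[of "-1" g 0] ig by simp
  ultimately have "g 0 - (LINT x:{..0}|lborel. g' x) = 0" by (intro tendsto_integrable_zero)
  then show ?thesis by simp
qed

lemma ftc_zero:
  fixes g g' :: "real \<Rightarrow> real"
  assumes D: "\<And>x. (g has_real_derivative g' x) (at x)" and ig': "integrable lborel g'"
    and ig: "integrable lborel g"
  shows "(LINT x|lborel. g' x) = 0"
proof -
  have s1: "set_integrable lborel {..0} g'" "set_integrable lborel {0<..} g'" "set_integrable lborel {0..} g'"
    unfolding set_integrable_def using ig' by (intro integrable_mult_indicator; auto)+
  have "(LINT x:{0<..}|lborel. g' x) = (LINT x:{0..}|lborel. g' x)"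
    apply (rule set_integral_cong_set)
    using s1 unfolding set_integrable_def set_borel_measurable_def
      apply (auto intro: borel_measurable_integrable)[2]
    using AE_lborel_singleton[of 0] by eventually_elim auto
  moreover have "(LINT x|lborel. g' x) = (LINT x:{..0} \<union> {0<..}|lborel. g' x)"
  proof -
    have "{..0::real} \<union> {0<..} = UNIV" by auto
    then show ?thesis by (simp add: set_lebesgue_integral_def)
  qed
  moreover have "\<dots> = (LINT x:{..0}|lborel. g' x) + (LINT x:{0<..}|lborel. g' x)"
    by (rule set_integral_Un) (use s1 in auto)
  ultimately show ?thesis using lim_top[OF D ig' ig] lim_bot[OF D ig' ig] by simp
qed



definition psi :: "real \<Rightarrow> real \<Rightarrow> real" where
  "psi a t = (if 0 < t then exp (- a / t) else 0)"
definition dpsi :: "real \<Rightarrow> real \<Rightarrow> real" where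
  "dpsi a t = (if 0 < t then a / t\<^sup>2 * exp (- a / t) else 0)"

lemma exp_bound3:
  fixes a t :: real assumes "0 < a" "0 < t"
  shows "exp (- a / t) \<le> 27 * t ^ 3 / a ^ 3"
proof -
  have x0: "0 \<le> a / (3 * t)" using assms by simp
  have "(a / (3 * t)) ^ 3 \<le> (1 + a / (3 * t)) ^ 3"
    by (rule power_mono) (use x0 in auto)
  also have "\<dots> \<le> exp (a / (3 * t)) ^ 3"
    by (rule power_mono) (use x0 exp_ge_add_one_self in auto)
  also have "\<dots> = exp (a / t)"
    by (simp add: exp_of_nat_mult[symmetric])
  finally have h: "a ^ 3 / (27 * t ^ 3) \<le> exp (a / t)"
    by (simp add: power_divide power_mult_distrib)
  have "exp (- a / t) = 1 / exp (a / t)" by (simp add: exp_minus field_simps)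
  also have "\<dots> \<le> 1 / (a ^ 3 / (27 * t ^ 3))"
    by (rule divide_left_mono[OF h]) (use assms in auto)
  also have "\<dots> = 27 * t ^ 3 / a ^ 3" by simp
  finally show ?thesis .
qed

lemma psi_nonneg: "0 \<le> psi a t" by (simp add: psi_def)
lemma dpsi_nonneg: "0 \<le> a \<Longrightarrow> 0 \<le> dpsi a t" by (simp add: dpsi_def)

lemma lim_right_aux:
  fixes a :: real and f :: "real \<Rightarrow> real" and k :: nat
  assumes a: "0 < a" and b: "\<And>t. 0 < t \<Longrightarrow> \<bar>f t\<bar> \<le> C * t ^ Suc k"
  shows "(f \<longlongrightarrow> 0) (at_right 0)"
proof (rule Lim_null_comparison)
  show "eventually (\<lambda>t. norm (f t) \<le> C * t ^ Suc k) (at_right 0)"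
    using b by (auto simp: eventually_at_right_less eventually_at_filter intro!: eventually_at_rightI[of 0 1])
  have "((\<lambda>t. C * t ^ Suc k) \<longlongrightarrow> C * 0 ^ Suc k) (at_right (0::real))"
    by (intro tendsto_intros)
  then show "((\<lambda>t. C * t ^ Suc k) \<longlongrightarrow> 0) (at_right (0::real))" by simp
qed



lemma psi_deriv:
  fixes a t :: real assumes a: "0 < a"
  shows "(psi a has_real_derivative dpsi a t) (at t)"
proof -
  consider "t > 0" | "t < 0" | "t = 0" by linarith
  then show ?thesis
  proof cases
    case 1
    have d: "((\<lambda>t. exp (- a / t)) has_real_derivative a / t\<^sup>2 * exp (- a / t)) (at t)"
      using 1 by (auto intro!: derivative_eq_intros simp: field_simps power2_eq_square)
    show ?thesis
      apply (rule has_field_derivative_transform_within_open[OF _ _ _, of "\<lambda>t. exp (- a / t)" _ _ "{0<..}"])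
      using d 1 by (auto simp: psi_def dpsi_def)
  next
    case 2
    have d: "((\<lambda>t. 0) has_real_derivative 0) (at t)" by simp
    show ?thesis
      apply (rule has_field_derivative_transform_within_open[OF _ _ _, of "\<lambda>t. 0" _ _ "{..<0}"])
      using d 2 by (auto simp: psi_def dpsi_def)
  next
    case 3
    have "((\<lambda>y. (psi a y - psi a 0) / (y - 0)) \<longlongrightarrow> 0) (at_right 0)"
    proof (rule lim_right_aux[OF a, where C = "27 / a ^ 3" and k = 1])
      fix y :: real assume y: "0 < y"
      have "\<bar>(psi a y - psi a 0) / (y - 0)\<bar> = exp (- a / y) / y" using y by (simp add: psi_def)
      also have "\<dots> \<le> (27 * y ^ 3 / a ^ 3) / y"
        by (rule divide_right_mono[OF exp_bound3[OF a y]]) (use y in simp)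
      also have "\<dots> = 27 / a ^ 3 * y ^ Suc 1" using y by (simp add: power2_eq_square power3_eq_cube)
      finally show "\<bar>(psi a y - psi a 0) / (y - 0)\<bar> \<le> 27 / a ^ 3 * y ^ Suc 1" .
    qed
    moreover have "((\<lambda>y. (psi a y - psi a 0) / (y - 0)) \<longlongrightarrow> 0) (at_left 0)"
    proof (rule tendsto_eventually)
      show "eventually (\<lambda>y. (psi a y - psi a 0) / (y - 0) = 0) (at_left (0::real))"
        by (auto simp: psi_def eventually_at_filter)
    qed
    ultimately have "((\<lambda>y. (psi a y - psi a 0) / (y - 0)) \<longlongrightarrow> 0) (at 0)"
      by (simp add: filterlim_at_split)
    then show ?thesis using 3 by (simp add: has_field_derivative_iff dpsi_def)
  qed
qed

lemma dpsi_cont: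
  fixes a t :: real assumes a: "0 < a"
  shows "isCont (dpsi a) t"
proof -
  consider "t > 0" | "t < 0" | "t = 0" by linarith
  then show ?thesis
  proof cases
    case 1
    have c: "isCont (\<lambda>t. a / t\<^sup>2 * exp (- a / t)) t"
      using 1 by (auto intro!: continuous_intros)
    have "eventually (\<lambda>y. a / y\<^sup>2 * exp (- a / y) = dpsi a y) (nhds t)"
      using eventually_nhds_in_open[of "{0<..}" t] 1
      by (auto simp: dpsi_def elim!: eventually_mono)
    from isCont_cong[OF this] c show ?thesis by simp
  next
    case 2
    have "eventually (\<lambda>y. y < 0) (nhds t)"
      using eventually_nhds_in_open[of "{..<0}" t] 2 by auto
    then have "eventually (\<lambda>y. 0 = dpsi a y) (nhds t)"
      by (rule eventually_mono) (simp add: dpsi_def)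
    from isCont_cong[OF this] show ?thesis by simp
  next
    case 3
    have "(dpsi a \<longlongrightarrow> 0) (at_right 0)"
    proof (rule lim_right_aux[OF a, where C = "27 / a ^ 2" and k = 0])
      fix y :: real assume y: "0 < y"
      have "\<bar>dpsi a y\<bar> = a / y\<^sup>2 * exp (- a / y)" using y a by (simp add: dpsi_def)
      also have "\<dots> \<le> a / y\<^sup>2 * (27 * y ^ 3 / a ^ 3)"
        by (rule mult_left_mono[OF exp_bound3[OF a y]]) (use y a in simp)
      also have "\<dots> = 27 / a ^ 2 * y ^ Suc 0" using y a
        by (simp add: power2_eq_square power3_eq_cube field_simps)
      finally show "\<bar>dpsi a y\<bar> \<le> 27 / a ^ 2 * y ^ Suc 0" .
    qed
    moreover have "(dpsi a \<longlongrightarrow> 0) (at_left 0)"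
      by (rule tendsto_eventually) (auto simp: dpsi_def eventually_at_filter)
    ultimately have "(dpsi a \<longlongrightarrow> 0) (at 0)" by (simp add: filterlim_at_split)
    then show ?thesis using 3 by (simp add: isCont_def dpsi_def)
  qed
qed

lemma psi_cont: "0 < a \<Longrightarrow> isCont (psi a) t"
  using psi_deriv DERIV_isCont by blast



lemma psi_pos: "0 < t \<Longrightarrow> 0 < psi a t" by (simp add: psi_def)

lemma den_pos: "0 < d \<Longrightarrow> 0 < psi a (d + x) + psi a (d - x)"
proof -
  assume d: "0 < d"
  have "0 < d + x \<or> 0 < d - x" using d by linarith
  then show ?thesis using psi_pos[of "d + x" a] psi_pos[of "d - x" a] psi_nonneg[of a]
    by (smt (verit))
qed

lemma Hd_eq:
  fixes d x :: real assumes d: "0 < d"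
  shows "Hdelta d x = psi (2*d) (d + x) / (psi (2*d) (d + x) + psi (2*d) (d - x))"
proof -
  consider "d \<le> x" | "x \<le> - d" | "-d < x \<and> x < d" by linarith
  then show ?thesis
  proof cases
    case 1 then show ?thesis using d by (auto simp: Hdelta_def psi_def)
  next
    case 2 then show ?thesis using d by (auto simp: Hdelta_def psi_def)
  next
    case 3
    then have p: "0 < d + x" "0 < d - x" by auto
    have ex: "- (2*d) / (d - x) - (- (2*d) / (d + x)) = - (4 * x * d / (d\<^sup>2 - x\<^sup>2))"
      using p by (simp add: field_simps power2_eq_square)
    have "psi (2*d) (d + x) / (psi (2*d) (d + x) + psi (2*d) (d - x))
        = exp (- (2*d) / (d + x)) / (exp (- (2*d) / (d + x)) + exp (- (2*d) / (d - x)))"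
      using p by (simp add: psi_def)
    also have "\<dots> = 1 / (1 + exp (- (2*d) / (d - x)) / exp (- (2*d) / (d + x)))"
      by (simp add: field_simps)
    also have "\<dots> = 1 / (1 + exp (- (4 * x * d / (d\<^sup>2 - x\<^sup>2))))"
      by (simp add: exp_diff[symmetric]) (use p in \<open>simp add: field_simps power2_eq_square\<close>)
    finally show ?thesis using 3 by (simp add: Hdelta_def)
  qed
qed

definition HdD :: "real \<Rightarrow> real \<Rightarrow> real" where
  "HdD d x = (dpsi (2*d) (d + x) * psi (2*d) (d - x) + psi (2*d) (d + x) * dpsi (2*d) (d - x))
      / (psi (2*d) (d + x) + psi (2*d) (d - x))\<^sup>2"

lemma psi_chain[derivative_intros]:
  "0 < a \<Longrightarrow> (f has_real_derivative f') (at x within s) \<Longrightarrow>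
    ((\<lambda>x. psi a (f x)) has_real_derivative dpsi a (f x) * f') (at x within s)"
  using DERIV_chain2[OF psi_deriv] by blast

lemma Hd_deriv:
  fixes d x :: real assumes d: "0 < d"
  shows "(Hdelta d has_real_derivative HdD d x) (at x)"
proof -
  have e: "Hdelta d = (\<lambda>x. psi (2*d) (d + x) / (psi (2*d) (d + x) + psi (2*d) (d - x)))"
    using Hd_eq[OF d] by auto
  have nz: "psi (2*d) (d + x) + psi (2*d) (d - x) \<noteq> 0" using den_pos[OF d, of "2*d" x] by simp
  have dN: "((\<lambda>x. psi (2*d) (d + x)) has_real_derivative dpsi (2*d) (d + x)) (at x)"
    using psi_chain[of "2*d" "\<lambda>x. d + x" 1 x UNIV] d by (auto intro!: derivative_eq_intros)
  have dM: "((\<lambda>x. psi (2*d) (d - x)) has_real_derivative - dpsi (2*d) (d - x)) (at x)"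
    using psi_chain[of "2*d" "\<lambda>x. d - x" "-1" x UNIV] d by (auto intro!: derivative_eq_intros)
  have "((\<lambda>x. psi (2*d) (d + x) / (psi (2*d) (d + x) + psi (2*d) (d - x))) has_real_derivative
     (dpsi (2*d) (d + x) * (psi (2*d) (d + x) + psi (2*d) (d - x)) - psi (2*d) (d + x) * (dpsi (2*d) (d + x) + - dpsi (2*d) (d - x)))
       / ((psi (2*d) (d + x) + psi (2*d) (d - x)) * (psi (2*d) (d + x) + psi (2*d) (d - x)))) (at x)"
    by (rule DERIV_divide[OF dN DERIV_add[OF dN dM] nz])
  then show ?thesis unfolding e
    by (simp add: HdD_def power2_eq_square algebra_simps)
qed

lemma Hd_nonneg: "0 < d \<Longrightarrow> 0 \<le> Hdelta d x"
  by (simp add: Hd_eq psi_nonneg add_nonneg_nonneg)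

lemma HdD_nonneg: "0 < d \<Longrightarrow> 0 \<le> HdD d x"
  by (simp add: HdD_def psi_nonneg dpsi_nonneg)

lemma psi_cont_on[continuous_intros]: "0 < a \<Longrightarrow> continuous_on s f \<Longrightarrow> continuous_on s (\<lambda>x. psi a (f x))"
  by (rule continuous_on_compose2[of UNIV "psi a"]) (auto intro!: continuous_at_imp_continuous_on psi_cont)

lemma dpsi_cont_on[continuous_intros]: "0 < a \<Longrightarrow> continuous_on s f \<Longrightarrow> continuous_on s (\<lambda>x. dpsi a (f x))"
  by (rule continuous_on_compose2[of UNIV "dpsi a"]) (auto intro!: continuous_at_imp_continuous_on dpsi_cont)

lemma Hd_cont_on[continuous_intros]: "0 < d \<Longrightarrow> continuous_on s f \<Longrightarrow> continuous_on s (\<lambda>x. Hdelta d (f x))"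
  by (rule continuous_on_compose2[of UNIV "Hdelta d"]) (auto intro!: continuous_at_imp_continuous_on DERIV_isCont Hd_deriv)

lemma HdD_cont_on[continuous_intros]: "0 < d \<Longrightarrow> continuous_on s f \<Longrightarrow> continuous_on s (\<lambda>x. HdD d (f x))"
  unfolding HdD_def
  apply (intro continuous_intros; simp?)
  using den_pos[of d "2*d"] by (metis less_irrefl power_eq_0_iff)



definition Ef :: "real \<Rightarrow> real \<Rightarrow> real \<Rightarrow> real \<Rightarrow> real" where
  "Ef Z h \<sigma> v = exp (Z * (v - h) / (\<sigma> + (1 - \<sigma>) * v))"
definition EfD :: "real \<Rightarrow> real \<Rightarrow> real \<Rightarrow> real \<Rightarrow> real" where
  "EfD Z h \<sigma> v = Ef Z h \<sigma> v * (Z * (\<sigma> + (1 - \<sigma>) * h) / (\<sigma> + (1 - \<sigma>) * v)\<^sup>2)"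
definition FD :: "real \<Rightarrow> real \<Rightarrow> real \<Rightarrow> real \<Rightarrow> real \<Rightarrow> real \<Rightarrow> real" where
  "FD Z h \<sigma> T d v = EfD Z h \<sigma> v * Hdelta d (v - T - d) + Ef Z h \<sigma> v * HdD d (v - T - d)"

lemma F_eq: "0 < d \<Longrightarrow> Frate Z h \<sigma> T d v = Ef Z h \<sigma> v * Hdelta d (v - T - d)"
  by (auto simp: Frate_def Ef_def Hdelta_def)

lemma F_fun_eq: "0 < d \<Longrightarrow> Frate Z h \<sigma> T d = (\<lambda>v. Ef Z h \<sigma> v * Hdelta d (v - T - d))"
  using F_eq by auto

lemma Ef_deriv:
  assumes "\<sigma> + (1 - \<sigma>) * v \<noteq> 0"
  shows "(Ef Z h \<sigma> has_real_derivative EfD Z h \<sigma> v) (at v)"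
proof -
  have "((\<lambda>v. Z * (v - h) / (\<sigma> + (1 - \<sigma>) * v)) has_real_derivative
        Z * (\<sigma> + (1 - \<sigma>) * h) / (\<sigma> + (1 - \<sigma>) * v)\<^sup>2) (at v)"
  proof -
    have "((\<lambda>v. Z * (v - h) / (\<sigma> + (1 - \<sigma>) * v)) has_real_derivative
        ((Z * 1) * (\<sigma> + (1 - \<sigma>) * v) - Z * (v - h) * ((1 - \<sigma>) * 1)) / ((\<sigma> + (1 - \<sigma>) * v) * (\<sigma> + (1 - \<sigma>) * v))) (at v)"
    proof -
      have d1: "((\<lambda>x. x - h) has_real_derivative 1) (at v)"
        using DERIV_diff[OF DERIV_ident DERIV_const] by simp
      have d2: "((\<lambda>x. \<sigma> + (1 - \<sigma>) * x) has_real_derivative (1 - \<sigma>) * 1) (at v)"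
        using DERIV_add[OF DERIV_const DERIV_cmult[OF DERIV_ident]] by simp
      show ?thesis by (intro DERIV_divide DERIV_cmult d1 d2 assms)
    qed
    moreover have "((Z * 1) * (\<sigma> + (1 - \<sigma>) * v) - Z * (v - h) * ((1 - \<sigma>) * 1)) / ((\<sigma> + (1 - \<sigma>) * v) * (\<sigma> + (1 - \<sigma>) * v))
        = Z * (\<sigma> + (1 - \<sigma>) * h) / (\<sigma> + (1 - \<sigma>) * v)\<^sup>2"
      by (simp add: power2_eq_square algebra_simps)
    ultimately show ?thesis by simp
  qed
  from DERIV_chain2[OF DERIV_exp this] show ?thesis
    unfolding Ef_def[abs_def] EfD_def by (simp add: mult.commute)
qed

lemma F_deriv:
  assumes d: "0 < d" and n: "\<sigma> + (1 - \<sigma>) * v \<noteq> 0"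
  shows "(Frate Z h \<sigma> T d has_real_derivative FD Z h \<sigma> T d v) (at v)"
proof -
  have dH: "((\<lambda>v. Hdelta d (v - T - d)) has_real_derivative HdD d (v - T - d)) (at v)"
  proof -
    have "((\<lambda>v. v - T - d) has_real_derivative 1) (at v)" by (auto intro!: derivative_eq_intros)
    from DERIV_chain2[OF Hd_deriv[OF d] this] show ?thesis by simp
  qed
  show ?thesis unfolding F_fun_eq[OF d] FD_def
    using DERIV_mult[OF Ef_deriv[OF n] dH] by (simp add: algebra_simps)
qed

lemma Fw_eq:
  assumes d: "0 < d" and n: "\<sigma> + (1 - \<sigma>) * v \<noteq> 0"
  shows "Fw Z h \<sigma> T d v = FD Z h \<sigma> T d v"
  unfolding Fw_def using F_deriv[OF assms] by (rule DERIV_imp_deriv)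

lemma FD_nonneg:
  assumes d: "0 < d" and Z: "0 \<le> Z" and s: "0 \<le> \<sigma> + (1 - \<sigma>) * h"
  shows "0 \<le> FD Z h \<sigma> T d v"
  unfolding FD_def EfD_def
  using Hd_nonneg[OF d] HdD_nonneg[OF d] Z s
  by (intro add_nonneg_nonneg mult_nonneg_nonneg) (auto simp: Ef_def)

lemma F_nonneg: "0 < d \<Longrightarrow> 0 \<le> Frate Z h \<sigma> T d v"
  using Hd_nonneg by (simp add: F_eq Ef_def)

lemma FD_cont:
  assumes d: "0 < d"
  shows "continuous_on {v. 0 < \<sigma> + (1 - \<sigma>) * v} (FD Z h \<sigma> T d)"
  unfolding FD_def[abs_def] EfD_def Ef_def
  by (intro continuous_intros d) auto

lemma F_cont:
  assumes d: "0 < d"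
  shows "continuous_on {v. 0 < \<sigma> + (1 - \<sigma>) * v} (Frate Z h \<sigma> T d)"
  unfolding F_fun_eq[OF d] Ef_def
  by (intro continuous_intros d) auto



lemma cnj_meas[measurable]: "cnj \<in> borel_measurable borel"
  by (intro borel_measurable_continuous_onI continuous_intros)

lemma L2_meas: "L2 f \<Longrightarrow> f \<in> borel_measurable lborel"
  by (simp add: L2_def)

lemma L2_int: "L2 f \<Longrightarrow> integrable lborel (\<lambda>x. (cmod (f x))\<^sup>2)"
  by (simp add: L2_def)

lemma int_dom:
  fixes k :: "real \<Rightarrow> real"
  assumes f: "L2 f" and g: "L2 g" and k: "k \<in> borel_measurable lborel"
    and b: "\<And>x. \<bar>k x\<bar> \<le> B * (cmod (f x) * cmod (g x))"
  shows "integrable lborel k"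
proof (rule Bochner_Integration.integrable_bound)
  show "integrable lborel (\<lambda>x. \<bar>B\<bar> * ((cmod (f x))\<^sup>2 + (cmod (g x))\<^sup>2))"
    using L2_int[OF f] L2_int[OF g] by auto
  show "k \<in> borel_measurable lborel" by fact
  show "AE x in lborel. norm (k x) \<le> norm (\<bar>B\<bar> * ((cmod (f x))\<^sup>2 + (cmod (g x))\<^sup>2))"
  proof (rule AE_I2)
    fix x
    have m: "cmod (f x) * cmod (g x) \<le> (cmod (f x))\<^sup>2 + (cmod (g x))\<^sup>2"
      using sum_squares_bound[of "cmod (f x)" "cmod (g x)"] mult_nonneg_nonneg[OF norm_ge_zero norm_ge_zero, of "f x" "g x"]
      by linarith
    have "\<bar>k x\<bar> \<le> B * (cmod (f x) * cmod (g x))" by (rule b)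
    also have "\<dots> \<le> \<bar>B\<bar> * (cmod (f x) * cmod (g x))"
      by (rule mult_right_mono) auto
    also have "\<dots> \<le> \<bar>B\<bar> * ((cmod (f x))\<^sup>2 + (cmod (g x))\<^sup>2)"
      by (rule mult_left_mono[OF m]) auto
    finally show "norm (k x) \<le> norm (\<bar>B\<bar> * ((cmod (f x))\<^sup>2 + (cmod (g x))\<^sup>2))"
      by simp
  qed
qed

lemma Re_sq: "Re (z * cnj z) = (cmod z)\<^sup>2"
  by (metis Re_complex_of_real complex_norm_square)

lemma Re_prod_bound: "\<bar>Re (a * cnj b)\<bar> \<le> cmod a * cmod b"
  by (metis abs_Re_le_cmod complex_mod_cnj norm_mult)
lemma Im_prod_bound: "\<bar>Im (a * cnj b)\<bar> \<le> cmod a * cmod b"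
  by (metis abs_Im_le_cmod complex_mod_cnj norm_mult)

lemma Re_prod_deriv:
  assumes "(f has_vector_derivative f') (at x)" "(g has_vector_derivative g') (at x)"
  shows "((\<lambda>x. Re (f x * cnj (g x))) has_real_derivative Re (f x * cnj g' + f' * cnj (g x))) (at x)"
  unfolding has_real_derivative_iff_has_vector_derivative
  by (rule bounded_linear.has_vector_derivative[OF bounded_linear_Re,
        OF has_vector_derivative_mult[OF assms(1) has_vector_derivative_cnj[OF assms(2)]]])

lemma Im_prod_deriv:
  assumes "(f has_vector_derivative f') (at x)" "(g has_vector_derivative g') (at x)"
  shows "((\<lambda>x. Im (f x * cnj (g x))) has_real_derivative Im (f x * cnj g' + f' * cnj (g x))) (at x)"
  unfolding has_real_derivative_iff_has_vector_derivative
  by (rule bounded_linear.has_vector_derivative[OF bounded_linear_Im,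
        OF has_vector_derivative_mult[OF assms(1) has_vector_derivative_cnj[OF assms(2)]]])

lemma H2_facts:
  assumes "H2 p p1 p2"
  shows "\<And>x. (p has_vector_derivative p1 x) (at x)" "\<And>x. (p1 has_vector_derivative p2 x) (at x)"
    "L2 p" "L2 p1" "L2 p2"
  using assms by (auto simp: H2_def)

lemma H2_ints:
  assumes H: "H2 p p1 p2"
  shows "(LINT x|lborel. Re (p1 x * cnj (p x))) = 0"
    "(LINT x|lborel. Re (p2 x * cnj (p x))) = - (LINT x|lborel. (cmod (p1 x))\<^sup>2)"
    "(LINT x|lborel. Im (p2 x * cnj (p x))) = 0"
proof -
  note HF = H2_facts[OF H]
  note [measurable] = L2_meas[OF HF(3)] L2_meas[OF HF(4)] L2_meas[OF HF(5)]
  have iR1: "integrable lborel (\<lambda>x. Re (p1 x * cnj (p x)))"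
    by (rule int_dom[OF HF(4) HF(3), of _ 1]) (measurable, simp only: mult_1 Re_prod_bound)
  have iI1: "integrable lborel (\<lambda>x. Im (p1 x * cnj (p x)))"
    by (rule int_dom[OF HF(4) HF(3), of _ 1]) (measurable, simp only: mult_1 Im_prod_bound)
  have iR2: "integrable lborel (\<lambda>x. Re (p2 x * cnj (p x)))"
    by (rule int_dom[OF HF(5) HF(3), of _ 1]) (measurable, simp only: mult_1 Re_prod_bound)
  have iI2: "integrable lborel (\<lambda>x. Im (p2 x * cnj (p x)))"
    by (rule int_dom[OF HF(5) HF(3), of _ 1]) (measurable, simp only: mult_1 Im_prod_bound)
  have iN1: "integrable lborel (\<lambda>x. (cmod (p1 x))\<^sup>2)" by (rule L2_int[OF HF(4)])
  have iN: "integrable lborel (\<lambda>x. (cmod (p x))\<^sup>2)" by (rule L2_int[OF HF(3)])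
  have "(LINT x|lborel. Re (p x * cnj (p1 x) + p1 x * cnj (p x))) = 0"
  proof (rule ftc_zero)
    show "((\<lambda>x. Re (p x * cnj (p x))) has_real_derivative Re (p x * cnj (p1 x) + p1 x * cnj (p x))) (at x)" for x
      by (rule Re_prod_deriv[OF HF(1) HF(1)])
    have "(\<lambda>x. Re (p x * cnj (p1 x) + p1 x * cnj (p x))) = (\<lambda>x. 2 * Re (p1 x * cnj (p x)))"
      by (rule ext) (simp add: algebra_simps)
    then show "integrable lborel (\<lambda>x. Re (p x * cnj (p1 x) + p1 x * cnj (p x)))"
      using integrable_mult_right[OF iR1, of 2] by (simp only:)
    have "(\<lambda>x. Re (p x * cnj (p x))) = (\<lambda>x. (cmod (p x))\<^sup>2)"
      by (rule ext) (simp only: Re_sq plus_complex.sel)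
    then show "integrable lborel (\<lambda>x. Re (p x * cnj (p x)))" using iN by (simp only:)
  qed
  moreover have "(\<lambda>x. Re (p x * cnj (p1 x) + p1 x * cnj (p x))) = (\<lambda>x. 2 * Re (p1 x * cnj (p x)))"
    by (rule ext) (simp add: algebra_simps)
  ultimately show "(LINT x|lborel. Re (p1 x * cnj (p x))) = 0" by (simp only: integral_mult_right_zero)
  have "(LINT x|lborel. Re (p1 x * cnj (p1 x) + p2 x * cnj (p x))) = 0"
  proof (rule ftc_zero)
    show "((\<lambda>x. Re (p1 x * cnj (p x))) has_real_derivative Re (p1 x * cnj (p1 x) + p2 x * cnj (p x))) (at x)" for x
      by (rule Re_prod_deriv[OF HF(2) HF(1)])
    have "(\<lambda>x. Re (p1 x * cnj (p1 x) + p2 x * cnj (p x))) = (\<lambda>x. (cmod (p1 x))\<^sup>2 + Re (p2 x * cnj (p x)))"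
      by (rule ext) (simp only: Re_sq plus_complex.sel)
    then show "integrable lborel (\<lambda>x. Re (p1 x * cnj (p1 x) + p2 x * cnj (p x)))"
      using Bochner_Integration.integrable_add[OF iN1 iR2] by (simp only:)
    show "integrable lborel (\<lambda>x. Re (p1 x * cnj (p x)))" by (rule iR1)
  qed
  moreover have "(\<lambda>x. Re (p1 x * cnj (p1 x) + p2 x * cnj (p x))) = (\<lambda>x. (cmod (p1 x))\<^sup>2 + Re (p2 x * cnj (p x)))"
    by (rule ext) (simp only: Re_sq plus_complex.sel)
  ultimately show "(LINT x|lborel. Re (p2 x * cnj (p x))) = - (LINT x|lborel. (cmod (p1 x))\<^sup>2)"
    using Bochner_Integration.integral_add[OF iN1 iR2] by (simp only:)
  have "(LINT x|lborel. Im (p1 x * cnj (p1 x) + p2 x * cnj (p x))) = 0"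
  proof (rule ftc_zero)
    show "((\<lambda>x. Im (p1 x * cnj (p x))) has_real_derivative Im (p1 x * cnj (p1 x) + p2 x * cnj (p x))) (at x)" for x
      by (rule Im_prod_deriv[OF HF(2) HF(1)])
    have "(\<lambda>x. Im (p1 x * cnj (p1 x) + p2 x * cnj (p x))) = (\<lambda>x. Im (p2 x * cnj (p x)))"
      by (rule ext) (simp add: algebra_simps)
    then show "integrable lborel (\<lambda>x. Im (p1 x * cnj (p1 x) + p2 x * cnj (p x)))"
      using iI2 by (simp only:)
    show "integrable lborel (\<lambda>x. Im (p1 x * cnj (p x)))" by (rule iI1)
  qed
  moreover have "(\<lambda>x. Im (p1 x * cnj (p1 x) + p2 x * cnj (p x))) = (\<lambda>x. Im (p2 x * cnj (p x)))"
    by (rule ext) (simp add: algebra_simps)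
  ultimately show "(LINT x|lborel. Im (p2 x * cnj (p x))) = 0" by (simp only:)
qed



lemma pt_id:
  fixes lam P P1 P2 Q :: complex and c h a f :: real
  assumes e: "lam * P = P2 + of_real c * P1 + of_real a * (of_real h * P - of_real (1 - h) * Q) + of_real f * Q"
  shows "Re lam * (cmod P)\<^sup>2 = Re (P2 * cnj P) + c * Re (P1 * cnj P) + h * (a * (cmod P)\<^sup>2) + (f - (1 - h) * a) * Re (Q * cnj P)"
    and "Im lam * (cmod P)\<^sup>2 = Im (P2 * cnj P) + c * Im (P1 * cnj P) + (f - (1 - h) * a) * Im (Q * cnj P)"
proof -
  have ring: "\<And>X2 C X1 Aa H P H' Q Ff cP :: complex.
     (X2 + C * X1 + Aa * (H * P - H' * Q) + Ff * Q) * cP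
       = X2 * cP + C * (X1 * cP) + (Aa * H) * (P * cP) - (Aa * H') * (Q * cP) + Ff * (Q * cP)"
    by (simp add: algebra_simps)
  have n: "P * cnj P = of_real ((cmod P)\<^sup>2)" by (rule complex_norm_square[symmetric])
  have L: "lam * P * cnj P = lam * of_real ((cmod P)\<^sup>2)" by (simp only: mult.assoc n)
  have "lam * P * cnj P = (P2 + of_real c * P1 + of_real a * (of_real h * P - of_real (1 - h) * Q) + of_real f * Q) * cnj P"
    using e by simp
  also have "\<dots> = P2 * cnj P + of_real c * (P1 * cnj P) + (of_real a * of_real h) * (P * cnj P)
      - (of_real a * of_real (1 - h)) * (Q * cnj P) + of_real f * (Q * cnj P)"
    by (rule ring)
  finally have e3: "lam * of_real ((cmod P)\<^sup>2) = P2 * cnj P + of_real c * (P1 * cnj P) + (of_real a * of_real h) * of_real ((cmod P)\<^sup>2)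
      - (of_real a * of_real (1 - h)) * (Q * cnj P) + of_real f * (Q * cnj P)"
    unfolding L n .
  have r1: "\<And>r z. Re (of_real r * z) = r * Re z" by simp
  have r2: "\<And>r z. Im (of_real r * z) = r * Im z" by simp
  have r3: "\<And>r z. Re (z * of_real r) = Re z * r" by simp
  have r4: "\<And>r z. Im (z * of_real r) = Im z * r" by simp
  from arg_cong[OF e3, of Re] have "Re lam * (cmod P)\<^sup>2 = Re (P2 * cnj P) + c * Re (P1 * cnj P) + a * h * (cmod P)\<^sup>2
      - a * (1 - h) * Re (Q * cnj P) + f * Re (Q * cnj P)"
    by (simp only: of_real_mult[symmetric] r1 r3 plus_complex.sel minus_complex.sel Re_complex_of_real mult.assoc)
  then show "Re lam * (cmod P)\<^sup>2 = Re (P2 * cnj P) + c * Re (P1 * cnj P) + h * (a * (cmod P)\<^sup>2) + (f - (1 - h) * a) * Re (Q * cnj P)"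
    by (simp add: algebra_simps)
  from arg_cong[OF e3, of Im] have "Im lam * (cmod P)\<^sup>2 = Im (P2 * cnj P) + c * Im (P1 * cnj P) + 0
      - a * (1 - h) * Im (Q * cnj P) + f * Im (Q * cnj P)"
    by (simp only: of_real_mult[symmetric] r2 r4 plus_complex.sel minus_complex.sel Im_complex_of_real mult_zero_right)
  then show "Im lam * (cmod P)\<^sup>2 = Im (P2 * cnj P) + c * Im (P1 * cnj P) + (f - (1 - h) * a) * Im (Q * cnj P)"
    by (simp add: algebra_simps)
qed




lemma ab_le:
  fixes a b e :: real assumes "0 < e"
  shows "a * b \<le> a\<^sup>2 / (4 * e) + e * b\<^sup>2"
proof -
  have eq: "a\<^sup>2 / (4 * e) + e * b\<^sup>2 - a * b = (a - 2 * e * b)\<^sup>2 / (4 * e)"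
    using assms by (simp add: field_simps power2_eq_square)
  have "0 \<le> (a - 2 * e * b)\<^sup>2 / (4 * e)" using assms by simp
  then show ?thesis using eq by linarith
qed

lemma pw1:
  fixes G K r a b e :: real
  assumes "\<bar>G\<bar> \<le> K" "\<bar>r\<bar> \<le> a * b" "0 \<le> a" "0 \<le> b" "0 < e"
  shows "G * r \<le> K * (a\<^sup>2 / (4 * e) + e * b\<^sup>2)"
proof -
  have ab: "a * b \<le> a\<^sup>2 / (4 * e) + e * b\<^sup>2" by (rule ab_le[OF assms(5)])
  have K0: "0 \<le> K" using assms(1) by linarith
  have "G * r \<le> \<bar>G\<bar> * \<bar>r\<bar>" by (simp add: abs_mult[symmetric])
  also have "\<dots> \<le> K * (a * b)" using assms by (intro mult_mono) auto
  also have "\<dots> \<le> K * (a\<^sup>2 / (4 * e) + e * b\<^sup>2)"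
    using ab K0 by (rule mult_left_mono)
  finally show ?thesis .
qed

lemma sq2:
  fixes x y :: real
  shows "(x + y)\<^sup>2 \<le> 2 * (x\<^sup>2 + y\<^sup>2)"
proof -
  have "2 * (x\<^sup>2 + y\<^sup>2) - (x + y)\<^sup>2 = (x - y)\<^sup>2" by (simp add: power2_eq_square algebra_simps)
  moreover have "0 \<le> (x - y)\<^sup>2" by simp
  ultimately show ?thesis by linarith
qed

lemma sq3:
  fixes a b e :: real assumes "0 < e"
  shows "2 * (a * b)\<^sup>2 \<le> (a\<^sup>2 / (2 * e) + e * b\<^sup>2)\<^sup>2"
proof -
  define A where "A = a\<^sup>2 / (2 * e)"
  define B where "B = e * b\<^sup>2"
  have AB: "A * B = (a * b)\<^sup>2 / 2" using assms unfolding A_def B_def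
    by (simp add: field_simps power2_eq_square)
  have "(A + B)\<^sup>2 - 4 * (A * B) = (A - B)\<^sup>2" by (simp add: power2_eq_square algebra_simps)
  moreover have "0 \<le> (A - B)\<^sup>2" by simp
  ultimately have "4 * (A * B) \<le> (A + B)\<^sup>2" by linarith
  then show ?thesis unfolding AB by (simp add: A_def B_def)
qed

lemma pw2:
  fixes G K r s a b e :: real
  assumes "\<bar>G\<bar> \<le> K" "r\<^sup>2 + s\<^sup>2 \<le> (a * b)\<^sup>2" "0 \<le> a" "0 \<le> b" "0 < e"
  shows "\<bar>G * r\<bar> + \<bar>G * s\<bar> \<le> K * (a\<^sup>2 / (2 * e) + e * b\<^sup>2)"
proof -
  have R0: "0 \<le> a\<^sup>2 / (2 * e) + e * b\<^sup>2" using assms by simp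
  have "(\<bar>r\<bar> + \<bar>s\<bar>)\<^sup>2 \<le> 2 * (\<bar>r\<bar>\<^sup>2 + \<bar>s\<bar>\<^sup>2)" by (rule sq2)
  also have "\<dots> = 2 * (r\<^sup>2 + s\<^sup>2)" by simp
  also have "\<dots> \<le> 2 * (a * b)\<^sup>2" using assms(2) by simp
  also have "\<dots> \<le> (a\<^sup>2 / (2 * e) + e * b\<^sup>2)\<^sup>2" by (rule sq3[OF assms(5)])
  finally have rs: "\<bar>r\<bar> + \<bar>s\<bar> \<le> a\<^sup>2 / (2 * e) + e * b\<^sup>2"
    by (rule power2_le_imp_le[OF _ R0])
  have K0: "0 \<le> K" using assms(1) by linarith
  have "\<bar>G * r\<bar> + \<bar>G * s\<bar> = \<bar>G\<bar> * (\<bar>r\<bar> + \<bar>s\<bar>)" by (simp only: abs_mult distrib_left)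
  also have "\<dots> \<le> K * (a\<^sup>2 / (2 * e) + e * b\<^sup>2)"
    by (rule mult_mono[OF assms(1) rs K0]) simp
  finally show ?thesis .
qed

lemma pw3:
  fixes r a b c :: real
  assumes "\<bar>r\<bar> \<le> a * b" "0 \<le> a" "0 \<le> b" "0 < c"
  shows "\<bar>c * r\<bar> \<le> a\<^sup>2 + c\<^sup>2 / 4 * b\<^sup>2"
proof -
  have eq: "a\<^sup>2 + c\<^sup>2 / 4 * b\<^sup>2 - c * (a * b) = (a - c * b / 2)\<^sup>2"
    by (simp add: field_simps power2_eq_square)
  have "0 \<le> (a - c * b / 2)\<^sup>2" by simp
  then have "c * (a * b) \<le> a\<^sup>2 + c\<^sup>2 / 4 * b\<^sup>2" using eq by linarith
  moreover have "\<bar>c * r\<bar> \<le> c * (a * b)"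
    using assms by (simp add: abs_mult mult_left_mono)
  ultimately show ?thesis by linarith
qed

lemma Re_Im_sq: "(Re (a * cnj b))\<^sup>2 + (Im (a * cnj b))\<^sup>2 = (cmod a * cmod b)\<^sup>2"
  by (metis cmod_power2 complex_mod_cnj norm_mult)



theorem lemma4p1:
  fixes eps h Z \<sigma> Tign \<delta> c :: real
    and u u1 u2 y y1 y2 :: "real \<Rightarrow> real"
    and lam :: complex
    and p p1 p2 q q1 q2 :: "real \<Rightarrow> complex"
    and eps1 :: real
  assumes eps: "0 < eps" "eps < 1"
    and h: "0 < h" "h < 1"
    and Z: "0 < Z"
    and \<sigma>: "0 < \<sigma>" "\<sigma> < 1"
    and Tign: "0 < Tign"
    and \<delta>: "0 < \<delta>" "Tign + 2 * \<delta> < 1"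
    and c: "0 < c"
    and u_deriv: "\<And>x. (u has_real_derivative u1 x) (at x)"
                 "\<And>x. (u1 has_real_derivative u2 x) (at x)"
    and y_deriv: "\<And>x. (y has_real_derivative y1 x) (at x)"
                 "\<And>x. (y1 has_real_derivative y2 x) (at x)"
    and front_u: "\<And>x. u2 x + c * u1 x
                   + y x * Frate Z h \<sigma> Tign \<delta> (h * u x + (1 - h) * (1 - y x)) = 0"
    and front_y: "\<And>x. eps * y2 x + c * y1 x
                   - y x * Frate Z h \<sigma> Tign \<delta> (h * u x + (1 - h) * (1 - y x)) = 0"
    and lim_u: "(u \<longlongrightarrow> 1) at_bot" "(u \<longlongrightarrow> 0) at_top"
    and lim_y: "(y \<longlongrightarrow> 0) at_bot" "(y \<longlongrightarrow> 1) at_top"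
    and y_bounds: "\<And>x. 0 \<le> y x \<and> y x \<le> 1"
    and w_bounds: "\<And>x. 0 \<le> h * u x + (1 - h) * (1 - y x) \<and> h * u x + (1 - h) * (1 - y x) \<le> 1"
    and Re_lam: "0 \<le> Re lam"
    and p_H2: "H2 p p1 p2"
    and q_H2: "H2 q q1 q2"
    and eq_p: "\<And>x. lam * p x = p2 x + of_real c * p1 x
         + of_real (Fw Z h \<sigma> Tign \<delta> (h * u x + (1 - h) * (1 - y x)) * y x)
             * (of_real h * p x - of_real (1 - h) * q x)
         + of_real (Frate Z h \<sigma> Tign \<delta> (h * u x + (1 - h) * (1 - y x))) * q x"
    and eq_q: "\<And>x. lam * q x = of_real eps * q2 x + of_real c * q1 x
         - of_real (Fw Z h \<sigma> Tign \<delta> (h * u x + (1 - h) * (1 - y x)) * y x)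
             * (of_real h * p x - of_real (1 - h) * q x)
         - of_real (Frate Z h \<sigma> Tign \<delta> (h * u x + (1 - h) * (1 - y x))) * q x"
    and eps1: "0 < eps1"
  shows
   "Re lam * (LINT x|lborel. (cmod (p x))\<^sup>2)
      \<le> h * (LINT x|lborel. Fw Z h \<sigma> Tign \<delta> (h * u x + (1 - h) * (1 - y x)) * y x * (cmod (p x))\<^sup>2)
        + (LINT x|lborel.
            (Frate Z h \<sigma> Tign \<delta> (h * u x + (1 - h) * (1 - y x))
              + (1 - h) * Fw Z h \<sigma> Tign \<delta> (h * u x + (1 - h) * (1 - y x)) * y x)
            * ((cmod (q x))\<^sup>2 / (4 * eps1) + eps1 * (cmod (p x))\<^sup>2))
    \<and> (Re lam + \<bar>Im lam\<bar>) * (LINT x|lborel. (cmod (p x))\<^sup>2)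
      \<le> c\<^sup>2 / 4 * (LINT x|lborel. (cmod (p x))\<^sup>2)
        + h * (LINT x|lborel. Fw Z h \<sigma> Tign \<delta> (h * u x + (1 - h) * (1 - y x)) * y x * (cmod (p x))\<^sup>2)
        + (LINT x|lborel.
            (Frate Z h \<sigma> Tign \<delta> (h * u x + (1 - h) * (1 - y x))
              + (1 - h) * Fw Z h \<sigma> Tign \<delta> (h * u x + (1 - h) * (1 - y x)) * y x)
            * ((cmod (q x))\<^sup>2 / (2 * eps1) + eps1 * (cmod (p x))\<^sup>2))"
proof -
  note pH = H2_facts[OF p_H2] and qH = H2_facts[OF q_H2]
  note [measurable] = L2_meas[OF pH(3)] L2_meas[OF pH(4)] L2_meas[OF pH(5)] L2_meas[OF qH(3)]
  define W where "W = (\<lambda>x. h * u x + (1 - h) * (1 - y x))"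
  have Wx: "\<And>x. h * u x + (1 - h) * (1 - y x) = W x" by (simp add: W_def)
  define FF where "FF = (\<lambda>x. Frate Z h \<sigma> Tign \<delta> (W x))"
  define A where "A = (\<lambda>x. Fw Z h \<sigma> Tign \<delta> (W x) * y x)"
  define K where "K = (\<lambda>x. Frate Z h \<sigma> Tign \<delta> (W x) + (1 - h) * Fw Z h \<sigma> Tign \<delta> (W x) * y x)"
  define G where "G = (\<lambda>x. FF x - (1 - h) * A x)"
  have Wb: "\<And>x. 0 \<le> W x \<and> W x \<le> 1" using w_bounds by (simp add: W_def)
  have S01: "\<And>v. 0 \<le> v \<Longrightarrow> 0 < \<sigma> + (1 - \<sigma>) * v"
  proof -
    fix v :: real assume "0 \<le> v"
    then have "0 \<le> (1 - \<sigma>) * v" using \<sigma> by simp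
    then show "0 < \<sigma> + (1 - \<sigma>) * v" using \<sigma> by linarith
  qed
  have WS: "\<And>x. 0 < \<sigma> + (1 - \<sigma>) * W x" using S01 Wb by blast
  have FWeq: "\<And>x. Fw Z h \<sigma> Tign \<delta> (W x) = FD Z h \<sigma> Tign \<delta> (W x)"
    using Fw_eq[OF \<delta>(1)] WS by (metis less_irrefl)
  have ucont: "continuous_on UNIV u"
    using u_deriv(1) by (intro continuous_at_imp_continuous_on ballI) (blast intro: DERIV_isCont)
  have ycont: "continuous_on UNIV y"
    using y_deriv(1) by (intro continuous_at_imp_continuous_on ballI) (blast intro: DERIV_isCont)
  have Wcont: "continuous_on UNIV W" unfolding W_def
    by (intro continuous_intros ucont ycont)
  have FDWc: "continuous_on UNIV (\<lambda>x. FD Z h \<sigma> Tign \<delta> (W x))"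
    by (rule continuous_on_compose2[OF FD_cont[OF \<delta>(1)] Wcont]) (use WS in auto)
  have FFc: "continuous_on UNIV FF" unfolding FF_def
    by (rule continuous_on_compose2[OF F_cont[OF \<delta>(1)] Wcont]) (use WS in auto)
  have FWc: "continuous_on UNIV (\<lambda>x. Fw Z h \<sigma> Tign \<delta> (W x))" using FDWc FWeq by simp
  have [measurable]: "FF \<in> borel_measurable lborel"
    using borel_measurable_continuous_onI[OF FFc] by simp
  have [measurable]: "(\<lambda>x. Fw Z h \<sigma> Tign \<delta> (W x)) \<in> borel_measurable lborel"
    using borel_measurable_continuous_onI[OF FWc] by simp
  have [measurable]: "y \<in> borel_measurable lborel"
    using borel_measurable_continuous_onI[OF ycont] by simp
  have [measurable]: "A \<in> borel_measurable lborel" unfolding A_def by measurable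
  have [measurable]: "G \<in> borel_measurable lborel" unfolding G_def by measurable
  have Kf: "K = (\<lambda>x. FF x + (1 - h) * A x)" by (simp add: K_def FF_def A_def fun_eq_iff)
  have [measurable]: "K \<in> borel_measurable lborel" unfolding Kf by measurable
  have sub: "{0..1} \<subseteq> {v. 0 < \<sigma> + (1 - \<sigma>) * v}" using S01 by auto
  have "compact (FD Z h \<sigma> Tign \<delta> ` {0..1})"
    by (rule compact_continuous_image[OF continuous_on_subset[OF FD_cont[OF \<delta>(1)] sub] compact_Icc])
  then obtain BD where BD: "\<And>v. v \<in> {0..1} \<Longrightarrow> \<bar>FD Z h \<sigma> Tign \<delta> v\<bar> \<le> BD"
    using compact_imp_bounded bounded_iff by (metis image_eqI real_norm_def)
  have "compact (Frate Z h \<sigma> Tign \<delta> ` {0..1})"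
    by (rule compact_continuous_image[OF continuous_on_subset[OF F_cont[OF \<delta>(1)] sub] compact_Icc])
  then obtain BF where BF: "\<And>v. v \<in> {0..1} \<Longrightarrow> \<bar>Frate Z h \<sigma> Tign \<delta> v\<bar> \<le> BF"
    using compact_imp_bounded bounded_iff by (metis image_eqI real_norm_def)
  have FWnn: "\<And>x. 0 \<le> Fw Z h \<sigma> Tign \<delta> (W x)"
    unfolding FWeq using h \<sigma> Z by (intro FD_nonneg[OF \<delta>(1)]) (auto intro!: add_nonneg_nonneg)
  have FWb: "\<And>x. Fw Z h \<sigma> Tign \<delta> (W x) \<le> BD"
    using BD Wb FWeq FWnn by (metis abs_of_nonneg atLeastAtMost_iff)
  have FFnn: "\<And>x. 0 \<le> FF x" unfolding FF_def by (rule F_nonneg[OF \<delta>(1)])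
  have FFb: "\<And>x. FF x \<le> BF" unfolding FF_def using BF Wb F_nonneg[OF \<delta>(1)]
    by (metis abs_of_nonneg atLeastAtMost_iff)
  have Ann: "\<And>x. 0 \<le> A x" unfolding A_def using FWnn y_bounds by simp
  have Ab: "\<And>x. A x \<le> BD" unfolding A_def
  proof -
    fix x
    have "Fw Z h \<sigma> Tign \<delta> (W x) * y x \<le> Fw Z h \<sigma> Tign \<delta> (W x) * 1"
      using FWnn y_bounds by (intro mult_left_mono) auto
    then show "Fw Z h \<sigma> Tign \<delta> (W x) * y x \<le> BD" using FWb[of x] by simp
  qed
  have Keq: "\<And>x. K x = FF x + (1 - h) * A x" by (simp add: K_def FF_def A_def)
  have Knn: "\<And>x. 0 \<le> K x" unfolding Keq using FFnn Ann h by simp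
  have Kb: "\<And>x. K x \<le> BF + BD"
  proof -
    fix x
    have "(1 - h) * A x \<le> 1 * A x" using h Ann by (intro mult_right_mono) auto
    then show "K x \<le> BF + BD" unfolding Keq using FFb[of x] Ab[of x] by simp
  qed
  have GK: "\<And>x. \<bar>G x\<bar> \<le> K x"
  proof -
    fix x
    have "0 \<le> (1 - h) * A x" using h Ann by simp
    then show "\<bar>G x\<bar> \<le> K x" unfolding Keq G_def using FFnn[of x] by linarith
  qed
  have GB: "\<And>x. \<bar>G x\<bar> \<le> BF + BD" using GK Kb order_trans by blast
  have FFx: "\<And>x. Frate Z h \<sigma> Tign \<delta> (W x) = FF x" by (simp add: FF_def)
  have Ax: "\<And>x. Fw Z h \<sigma> Tign \<delta> (W x) * y x = A x" by (simp add: A_def)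
  have eqp: "\<And>x. lam * p x = p2 x + of_real c * p1 x + of_real (A x) * (of_real h * p x - of_real (1 - h) * q x)
      + of_real (FF x) * q x"
    using eq_p unfolding Wx FFx Ax .
  have idRe: "\<And>x. Re lam * (cmod (p x))\<^sup>2 = Re (p2 x * cnj (p x)) + c * Re (p1 x * cnj (p x))
      + h * (A x * (cmod (p x))\<^sup>2) + G x * Re (q x * cnj (p x))"
    unfolding G_def by (rule pt_id(1)[OF eqp])
  have idIm: "\<And>x. Im lam * (cmod (p x))\<^sup>2 = Im (p2 x * cnj (p x)) + c * Im (p1 x * cnj (p x))
      + G x * Im (q x * cnj (p x))"
    unfolding G_def by (rule pt_id(2)[OF eqp])
  have iN: "integrable lborel (\<lambda>x. (cmod (p x))\<^sup>2)" by (rule L2_int[OF pH(3)])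
  have iN1: "integrable lborel (\<lambda>x. (cmod (p1 x))\<^sup>2)" by (rule L2_int[OF pH(4)])
  have iR1: "integrable lborel (\<lambda>x. Re (p1 x * cnj (p x)))"
    by (rule int_dom[OF pH(4) pH(3), of _ 1]) (measurable, simp only: mult_1 Re_prod_bound)
  have iI1: "integrable lborel (\<lambda>x. Im (p1 x * cnj (p x)))"
    by (rule int_dom[OF pH(4) pH(3), of _ 1]) (measurable, simp only: mult_1 Im_prod_bound)
  have iR2: "integrable lborel (\<lambda>x. Re (p2 x * cnj (p x)))"
    by (rule int_dom[OF pH(5) pH(3), of _ 1]) (measurable, simp only: mult_1 Re_prod_bound)
  have iI2: "integrable lborel (\<lambda>x. Im (p2 x * cnj (p x)))"
    by (rule int_dom[OF pH(5) pH(3), of _ 1]) (measurable, simp only: mult_1 Im_prod_bound)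
  have iAN: "integrable lborel (\<lambda>x. A x * (cmod (p x))\<^sup>2)"
  proof (rule int_dom[OF pH(3) pH(3), of _ BD])
    show "(\<lambda>x. A x * (cmod (p x))\<^sup>2) \<in> borel_measurable lborel" by measurable
    fix x show "\<bar>A x * (cmod (p x))\<^sup>2\<bar> \<le> BD * (cmod (p x) * cmod (p x))"
      using Ann[of x] Ab[of x] by (simp add: abs_mult power2_eq_square mult_right_mono)
  qed
  have iGR: "integrable lborel (\<lambda>x. G x * Re (q x * cnj (p x)))"
  proof (rule int_dom[OF qH(3) pH(3), of _ "BF + BD"])
    show "(\<lambda>x. G x * Re (q x * cnj (p x))) \<in> borel_measurable lborel" by measurable
    fix x show "\<bar>G x * Re (q x * cnj (p x))\<bar> \<le> (BF + BD) * (cmod (q x) * cmod (p x))"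
      unfolding abs_mult by (rule mult_mono[OF GB Re_prod_bound]) (use GB[of x] in auto)
  qed
  have iGI: "integrable lborel (\<lambda>x. G x * Im (q x * cnj (p x)))"
  proof (rule int_dom[OF qH(3) pH(3), of _ "BF + BD"])
    show "(\<lambda>x. G x * Im (q x * cnj (p x))) \<in> borel_measurable lborel" by measurable
    fix x show "\<bar>G x * Im (q x * cnj (p x))\<bar> \<le> (BF + BD) * (cmod (q x) * cmod (p x))"
      unfolding abs_mult by (rule mult_mono[OF GB Im_prod_bound]) (use GB[of x] in auto)
  qed
  have iKq: "integrable lborel (\<lambda>x. K x * (cmod (q x))\<^sup>2)"
  proof (rule int_dom[OF qH(3) qH(3), of _ "BF + BD"])
    show "(\<lambda>x. K x * (cmod (q x))\<^sup>2) \<in> borel_measurable lborel" by measurable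
    fix x show "\<bar>K x * (cmod (q x))\<^sup>2\<bar> \<le> (BF + BD) * (cmod (q x) * cmod (q x))"
      using Knn[of x] Kb[of x] by (simp add: abs_mult power2_eq_square mult_right_mono)
  qed
  have iKp: "integrable lborel (\<lambda>x. K x * (cmod (p x))\<^sup>2)"
  proof (rule int_dom[OF pH(3) pH(3), of _ "BF + BD"])
    show "(\<lambda>x. K x * (cmod (p x))\<^sup>2) \<in> borel_measurable lborel" by measurable
    fix x show "\<bar>K x * (cmod (p x))\<^sup>2\<bar> \<le> (BF + BD) * (cmod (p x) * cmod (p x))"
      using Knn[of x] Kb[of x] by (simp add: abs_mult power2_eq_square mult_right_mono)
  qed
  have iK: "integrable lborel (\<lambda>x. K x * ((cmod (q x))\<^sup>2 / (m * eps1) + eps1 * (cmod (p x))\<^sup>2))" for m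
  proof -
    have "integrable lborel (\<lambda>x. (1 / (m * eps1)) * (K x * (cmod (q x))\<^sup>2) + eps1 * (K x * (cmod (p x))\<^sup>2))"
      using iKq iKp by simp
    moreover have "(\<lambda>x. (1 / (m * eps1)) * (K x * (cmod (q x))\<^sup>2) + eps1 * (K x * (cmod (p x))\<^sup>2))
        = (\<lambda>x. K x * ((cmod (q x))\<^sup>2 / (m * eps1) + eps1 * (cmod (p x))\<^sup>2))"
      by (rule ext) (simp add: algebra_simps)
    ultimately show ?thesis by simp
  qed
  note HI = H2_ints[OF p_H2]
  have IRe: "Re lam * (LINT x|lborel. (cmod (p x))\<^sup>2) = - (LINT x|lborel. (cmod (p1 x))\<^sup>2)
      + h * (LINT x|lborel. A x * (cmod (p x))\<^sup>2) + (LINT x|lborel. G x * Re (q x * cnj (p x)))"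
  proof -
    have "Re lam * (LINT x|lborel. (cmod (p x))\<^sup>2) = (LINT x|lborel. Re lam * (cmod (p x))\<^sup>2)" by simp
    also have "\<dots> = (LINT x|lborel. Re (p2 x * cnj (p x)) + c * Re (p1 x * cnj (p x))
      + h * (A x * (cmod (p x))\<^sup>2) + G x * Re (q x * cnj (p x)))" by (simp only: idRe)
    also have "\<dots> = (LINT x|lborel. Re (p2 x * cnj (p x))) + c * (LINT x|lborel. Re (p1 x * cnj (p x)))
      + h * (LINT x|lborel. A x * (cmod (p x))\<^sup>2) + (LINT x|lborel. G x * Re (q x * cnj (p x)))"
      using iR2 iR1 iAN iGR by simp
    finally show ?thesis using HI by simp
  qed
  have IIm: "Im lam * (LINT x|lborel. (cmod (p x))\<^sup>2) = c * (LINT x|lborel. Im (p1 x * cnj (p x)))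
      + (LINT x|lborel. G x * Im (q x * cnj (p x)))"
  proof -
    have "Im lam * (LINT x|lborel. (cmod (p x))\<^sup>2) = (LINT x|lborel. Im lam * (cmod (p x))\<^sup>2)" by simp
    also have "\<dots> = (LINT x|lborel. Im (p2 x * cnj (p x)) + c * Im (p1 x * cnj (p x))
      + G x * Im (q x * cnj (p x)))" by (simp only: idIm)
    also have "\<dots> = (LINT x|lborel. Im (p2 x * cnj (p x))) + c * (LINT x|lborel. Im (p1 x * cnj (p x)))
      + (LINT x|lborel. G x * Im (q x * cnj (p x)))"
      using iI2 iI1 iGI by simp
    finally show ?thesis using HI by simp
  qed
  have N0: "0 \<le> (LINT x|lborel. (cmod (p x))\<^sup>2)" by simp
  have N10: "0 \<le> (LINT x|lborel. (cmod (p1 x))\<^sup>2)" by simp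
  have B1: "(LINT x|lborel. G x * Re (q x * cnj (p x)))
      \<le> (LINT x|lborel. K x * ((cmod (q x))\<^sup>2 / (4 * eps1) + eps1 * (cmod (p x))\<^sup>2))"
    by (rule integral_mono[OF iGR iK]) (rule pw1[OF GK Re_prod_bound norm_ge_zero norm_ge_zero eps1])
  have iabs: "integrable lborel (\<lambda>x. \<bar>G x * Re (q x * cnj (p x))\<bar> + \<bar>G x * Im (q x * cnj (p x))\<bar>)"
    using iGR iGI by simp
  have B2: "(LINT x|lborel. \<bar>G x * Re (q x * cnj (p x))\<bar> + \<bar>G x * Im (q x * cnj (p x))\<bar>)
      \<le> (LINT x|lborel. K x * ((cmod (q x))\<^sup>2 / (2 * eps1) + eps1 * (cmod (p x))\<^sup>2))"
    by (rule integral_mono[OF iabs iK])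
       (rule pw2[OF GK _ norm_ge_zero norm_ge_zero eps1], simp only: Re_Im_sq order_refl)
  have B2s: "(LINT x|lborel. \<bar>G x * Re (q x * cnj (p x))\<bar> + \<bar>G x * Im (q x * cnj (p x))\<bar>)
      = (LINT x|lborel. \<bar>G x * Re (q x * cnj (p x))\<bar>) + (LINT x|lborel. \<bar>G x * Im (q x * cnj (p x))\<bar>)"
    using iGR iGI by simp
  have B3: "\<bar>LINT x|lborel. G x * Re (q x * cnj (p x))\<bar> \<le> (LINT x|lborel. \<bar>G x * Re (q x * cnj (p x))\<bar>)"
    by (rule integral_abs_bound_integral[OF iGR]) (use iGR in auto)
  have B4: "\<bar>LINT x|lborel. G x * Im (q x * cnj (p x))\<bar> \<le> (LINT x|lborel. \<bar>G x * Im (q x * cnj (p x))\<bar>)"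
    by (rule integral_abs_bound_integral[OF iGI]) (use iGI in auto)
  have iNN: "integrable lborel (\<lambda>x. (cmod (p1 x))\<^sup>2 + c\<^sup>2 / 4 * (cmod (p x))\<^sup>2)"
    using iN1 iN by simp
  have B5: "\<bar>LINT x|lborel. c * Im (p1 x * cnj (p x))\<bar> \<le> (LINT x|lborel. (cmod (p1 x))\<^sup>2 + c\<^sup>2 / 4 * (cmod (p x))\<^sup>2)"
    by (rule integral_abs_bound_integral)
       (use iI1 iNN in simp, use iNN in simp, rule pw3[OF Im_prod_bound norm_ge_zero norm_ge_zero c])
  have B5s: "(LINT x|lborel. (cmod (p1 x))\<^sup>2 + c\<^sup>2 / 4 * (cmod (p x))\<^sup>2)
      = (LINT x|lborel. (cmod (p1 x))\<^sup>2) + c\<^sup>2 / 4 * (LINT x|lborel. (cmod (p x))\<^sup>2)"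
    using iN1 iN by simp
  have B5e: "(LINT x|lborel. c * Im (p1 x * cnj (p x))) = c * (LINT x|lborel. Im (p1 x * cnj (p x)))" by simp
  have ImAbs: "\<bar>Im lam\<bar> * (LINT x|lborel. (cmod (p x))\<^sup>2) = \<bar>Im lam * (LINT x|lborel. (cmod (p x))\<^sup>2)\<bar>"
    using N0 by (simp add: abs_mult)
  have fin1: "Re lam * (LINT x|lborel. (cmod (p x))\<^sup>2)
      \<le> h * (LINT x|lborel. A x * (cmod (p x))\<^sup>2)
        + (LINT x|lborel. K x * ((cmod (q x))\<^sup>2 / (4 * eps1) + eps1 * (cmod (p x))\<^sup>2))"
    using IRe B1 N10 by linarith
  have fin2: "(Re lam + \<bar>Im lam\<bar>) * (LINT x|lborel. (cmod (p x))\<^sup>2)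
      \<le> c\<^sup>2 / 4 * (LINT x|lborel. (cmod (p x))\<^sup>2) + h * (LINT x|lborel. A x * (cmod (p x))\<^sup>2)
        + (LINT x|lborel. K x * ((cmod (q x))\<^sup>2 / (2 * eps1) + eps1 * (cmod (p x))\<^sup>2))"
  proof -
    have "\<bar>Im lam * (LINT x|lborel. (cmod (p x))\<^sup>2)\<bar>
        \<le> \<bar>c * (LINT x|lborel. Im (p1 x * cnj (p x)))\<bar> + \<bar>LINT x|lborel. G x * Im (q x * cnj (p x))\<bar>"
      unfolding IIm by (rule abs_triangle_ineq)
    moreover have "(LINT x|lborel. G x * Re (q x * cnj (p x))) \<le> \<bar>LINT x|lborel. G x * Re (q x * cnj (p x))\<bar>"
      by simp
    ultimately show ?thesis
      using IRe B2 B2s B3 B4 B5 B5s B5e ImAbs N10 by (simp only: distrib_right)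
  qed
  show ?thesis using fin1 fin2 unfolding A_def K_def W_def by simp
qed

end
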